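(* Assume the discrete inf-sup condition: there is $\kappa>0$ such that $$\kappa\|w\|_W\le\sup_{v_\eta\in V_\eta,\ v_\eta\neq0}\frac{\mathcal{A}(w,v_\eta)}{\|v_\eta\|_V}\quad\text{for all } w\in W_\theta\cup S_\theta.$$ Let $(w^n_\theta)\subset W_\theta$ be a minimizing sequence, i.e. $\lim_n\|u-w^n_\theta\|_{op,\eta}=\inf_{w_\theta\in W_\theta}\|u-w_\theta\|_{op,\eta}$. Then $(w^n_\theta)$ has a subsequence converging weakly in $W$ to some $u^*_\theta\in\mathrm{cl}^{seq}_w(W_\theta)$, and every such weak limit satisfies $\|u-u^*_\theta\|_{op,\eta}\le\|u-w_\theta\|_{op,\eta}$ for all $w_\theta\in W_\theta$.
   Context: $W$ and $V$ are reflexive separable real Banach spaces. $\mathcal{A}:W\times V\to\mathbb{R}$ is a bilinear form with $\mathcal{A}(w,v)\le M\|w\|_W\|v\|_V$, $\mathcal{F}:V\to\mathbb{R}$ is bounded linear, and $u\in W$ is the unique solution of $\mathcal{A}(u,v)=\mathcal{F}(v)$ for all $v\in V$. $W_\theta\subseteq W$ and $V_\eta\subseteq V$ are arbitrary subsets, $V_\eta$ containing an element of nonzero norm. For $w\in W$, $\|w\|_{op,\eta}:=\sup_{v_\eta\in V_\eta,\ \|v_\eta\|_V\neq0}\mathcal{A}(w,v_\eta)/\|v_\eta\|_V$. $S_\theta:=\{w_1-w_2:\ w_1,w_2\in W_\theta\}$. $\mathrm{cl}^{seq}_w(W_\theta)$ is the set of all weak limits in $W$ of sequences in $W_\theta$.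 *)

theory Defs
  imports "HOL-Analysis.Analysis"
begin

definition reflexive_space :: "('a::real_normed_vector) itself \<Rightarrow> bool" where
  "reflexive_space _ \<longleftrightarrow>
     (\<forall>\<Phi> :: ('a \<Rightarrow>\<^sub>L real) \<Rightarrow>\<^sub>L real. \<exists>x::'a. \<forall>f. blinfun_apply \<Phi> f = blinfun_apply f x)"

definition separable_space :: "('a::real_normed_vector) itself \<Rightarrow> bool" where
  "separable_space _ \<longleftrightarrow> (\<exists>D::'a set. countable D \<and> closure D = UNIV)"

definition weak_conv :: "(nat \<Rightarrow> 'a::real_normed_vector) \<Rightarrow> 'a \<Rightarrow> bool" where
  "weak_conv xs x \<longleftrightarrow>
     (\<forall>f :: 'a \<Rightarrow> real. bounded_linear f \<longrightarrow> (\<lambda>n. f (xs n)) \<longlonglongrightarrow> f x)"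

definition seq_weak_closure :: "'a::real_normed_vector set \<Rightarrow> 'a set" where
  "seq_weak_closure S = {x. \<exists>xs. (\<forall>n. xs n \<in> S) \<and> weak_conv xs x}"

definition op_norm :: "('w \<Rightarrow> 'v::real_normed_vector \<Rightarrow> real) \<Rightarrow> 'v set \<Rightarrow> 'w \<Rightarrow> real" where
  "op_norm A V\<^sub>\<eta> w = (SUP v \<in> {v \<in> V\<^sub>\<eta>. norm v \<noteq> 0}. A w v / norm v)"

definition diff_set :: "'a::ab_group_add set \<Rightarrow> 'a set" where
  "diff_set S = {w1 - w2 | w1 w2. w1 \<in> S \<and> w2 \<in> S}"

end

theory Submission
  imports Defs "HOL-Library.Diagonal_Subsequence"
begin

definition hbA :: "('a::real_vector \<Rightarrow> real) \<Rightarrow> ('a \<times> real) set \<Rightarrow> ('a \<times> real) set set" where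
 "hbA p G0 = {G. (0,0) \<in> G \<and> (\<forall>x\<in>G. \<forall>y\<in>G. x + y \<in> G) \<and> (\<forall>c. \<forall>x\<in>G. c *\<^sub>R x \<in> G)
     \<and> G0 \<subseteq> G \<and> (\<forall>a. (0,a) \<in> G \<longrightarrow> a = 0) \<and> (\<forall>x a. (x,a) \<in> G \<longrightarrow> a \<le> p x)}"

lemma hbA_D:
  assumes "G \<in> hbA p G0"
  shows "(0,0) \<in> G" "\<And>x y. x \<in> G \<Longrightarrow> y \<in> G \<Longrightarrow> x + y \<in> G"
        "\<And>c x. x \<in> G \<Longrightarrow> c *\<^sub>R x \<in> G" "G0 \<subseteq> G"
        "\<And>b. (0,b) \<in> G \<Longrightarrow> b = 0" "\<And>x b. (x,b) \<in> G \<Longrightarrow> b \<le> p x"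
  using assms unfolding hbA_def mem_Collect_eq by blast+

lemma hb_ext:
  fixes p :: "'a::real_vector \<Rightarrow> real" and v :: 'a
  assumes sub: "\<And>x y. p (x + y) \<le> p x + p y"
    and hom: "\<And>c x. c \<ge> 0 \<Longrightarrow> p (c *\<^sub>R x) = c * p x"
    and v: "v \<noteq> 0" and dom0: "\<And>t. t * a \<le> p (t *\<^sub>R v)"
  shows "\<exists>g. linear g \<and> g v = a \<and> (\<forall>x. g x \<le> p x)"
proof -
  define G0 where "G0 = range (\<lambda>t. (t *\<^sub>R v, t * a))"
  define A where "A = hbA p G0"
  have G0A: "G0 \<in> A"
    unfolding A_def hbA_def G0_def
  proof (intro CollectI conjI ballI allI impI)
    show "(0,0) \<in> range (\<lambda>t. (t *\<^sub>R v, t * a))" by (rule range_eqI[of _ _ 0]) simp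
  next
    fix x y assume "x \<in> range (\<lambda>t. (t *\<^sub>R v, t * a))" "y \<in> range (\<lambda>t. (t *\<^sub>R v, t * a))"
    then obtain s t where "x = (s *\<^sub>R v, s * a)" "y = (t *\<^sub>R v, t * a)" by auto
    then show "x + y \<in> range (\<lambda>t. (t *\<^sub>R v, t * a))"
      by (intro range_eqI[of _ _ "s + t"]) (simp add: algebra_simps)
  next
    fix c x assume "x \<in> range (\<lambda>t. (t *\<^sub>R v, t * a))"
    then obtain s where "x = (s *\<^sub>R v, s * a)" by auto
    then show "c *\<^sub>R x \<in> range (\<lambda>t. (t *\<^sub>R v, t * a))"
      by (intro range_eqI[of _ _ "c * s"]) (simp add: algebra_simps)
  next
    fix b assume "(0, b) \<in> range (\<lambda>t. (t *\<^sub>R v, t * a))"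
    then obtain t where "0 = t *\<^sub>R v" "b = t * a" by auto
    then show "b = 0" using v by auto
  next
    fix x b assume "(x, b) \<in> range (\<lambda>t. (t *\<^sub>R v, t * a))"
    then obtain t where "x = t *\<^sub>R v" "b = t * a" by auto
    then show "b \<le> p x" using dom0 by simp
  qed simp
  have "\<forall>C\<in>chains A. \<exists>U\<in>A. \<forall>X\<in>C. X \<subseteq> U"
  proof
    fix C assume C: "C \<in> chains A"
    show "\<exists>U\<in>A. \<forall>X\<in>C. X \<subseteq> U"
    proof (cases "C = {}")
      case True then show ?thesis using G0A by auto
    next
      case False
      have CA: "C \<subseteq> A" and ch: "\<And>X Y. X \<in> C \<Longrightarrow> Y \<in> C \<Longrightarrow> X \<subseteq> Y \<or> Y \<subseteq> X"
        using C unfolding chains_def chain_subset_def by auto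
      obtain X0 where X0: "X0 \<in> C" using False by auto
      have mem: "(0,0) \<in> X" "\<And>x y. x \<in> X \<Longrightarrow> y \<in> X \<Longrightarrow> x + y \<in> X"
        "\<And>c x. x \<in> X \<Longrightarrow> c *\<^sub>R x \<in> X" "G0 \<subseteq> X"
        "\<And>b. (0,b) \<in> X \<Longrightarrow> b = 0" "\<And>x b. (x,b) \<in> X \<Longrightarrow> b \<le> p x"
        if "X \<in> C" for X
        using CA that hbA_D[of X p G0] unfolding A_def by blast+
      have "\<Union>C \<in> A"
        unfolding A_def hbA_def
      proof (intro CollectI conjI ballI allI impI)
        show "(0,0) \<in> \<Union>C" using X0 mem(1) by blast
      next
        fix x y assume "x \<in> \<Union>C" "y \<in> \<Union>C"
        then obtain X Y where XY: "X \<in> C" "Y \<in> C" "x \<in> X" "y \<in> Y" by auto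
        show "x + y \<in> \<Union>C"
        proof (cases "X \<subseteq> Y")
          case True then show ?thesis using XY mem(2)[of Y x y] by blast
        next
          case False then have "Y \<subseteq> X" using ch[OF XY(1,2)] by blast
          then show ?thesis using XY mem(2)[of X x y] by blast
        qed
      next
        fix c x assume "x \<in> \<Union>C"
        then obtain X where "X \<in> C" "x \<in> X" by auto
        then show "c *\<^sub>R x \<in> \<Union>C" using mem(3)[of X x c] by blast
      next
        show "G0 \<subseteq> \<Union>C" using X0 mem(4)[of X0] by blast
      next
        fix b assume "(0,b) \<in> \<Union>C"
        then obtain X where "X \<in> C" "(0,b) \<in> X" by auto
        then show "b = 0" using mem(5) by blast
      next
        fix x b assume "(x,b) \<in> \<Union>C"
        then obtain X where "X \<in> C" "(x,b) \<in> X" by auto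
        then show "b \<le> p x" using mem(6) by blast
      qed
      then show ?thesis by auto
    qed
  qed
  from Zorn_Lemma2[OF this] obtain M where MA: "M \<in> A" and maxM: "\<And>X. X \<in> A \<Longrightarrow> M \<subseteq> X \<Longrightarrow> X = M"
    by blast
  have M0: "(0,0) \<in> M" and Madd: "\<And>x y. x \<in> M \<Longrightarrow> y \<in> M \<Longrightarrow> x + y \<in> M"
    and Msc: "\<And>c x. x \<in> M \<Longrightarrow> c *\<^sub>R x \<in> M" and G0M: "G0 \<subseteq> M"
    and Mfun: "\<And>b. (0,b) \<in> M \<Longrightarrow> b = 0" and Mdom: "\<And>x b. (x,b) \<in> M \<Longrightarrow> b \<le> p x"
    using MA hbA_D[of M p G0] unfolding A_def by blast+
  have Mfun2: "b = b'" if "(x,b) \<in> M" "(x,b') \<in> M" for x b b'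
  proof -
    have "(x,b) + (-1) *\<^sub>R (x,b') \<in> M" using that Madd Msc by blast
    then have "(0, b - b') \<in> M" by simp
    then show ?thesis using Mfun[of "b - b'"] by simp
  qed
  have total: "\<exists>b. (y,b) \<in> M" for y
  proof (rule ccontr)
    assume ny: "\<nexists>b. (y,b) \<in> M"
    define L where "L = {b - p (x - y) | x b. (x,b) \<in> M}"
    define U where "U = {p (x + y) - b | x b. (x,b) \<in> M}"
    have LU: "l \<le> w" if lw: "l \<in> L" "w \<in> U" for l w
    proof -
      obtain x1 b1 x2 b2 where h: "(x1,b1) \<in> M" "(x2,b2) \<in> M" "l = b1 - p (x1 - y)" "w = p (x2 + y) - b2"
        using lw unfolding L_def U_def by blast
      have "(x1 + x2, b1 + b2) \<in> M" using Madd[OF h(1,2)] by simp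
      then have "b1 + b2 \<le> p (x1 + x2)" by (rule Mdom)
      also have "p (x1 + x2) \<le> p (x1 - y) + p (x2 + y)" using sub[of "x1 - y" "x2 + y"] by simp
      finally show ?thesis using h by simp
    qed
    have Lin: "b - p (x - y) \<in> L" if "(x,b) \<in> M" for x b unfolding L_def using that by blast
    have Uin: "p (x + y) - b \<in> U" if "(x,b) \<in> M" for x b unfolding U_def using that by blast
    have Lne: "L \<noteq> {}" using Lin[OF M0] by blast
    have Une: "p (0 + y) - 0 \<in> U" using Uin[OF M0] .
    define c where "c = Sup L"
    have bdd: "bdd_above L" using LU Une by (meson bdd_above.I)
    have cL: "b - p (x - y) \<le> c" if "(x,b) \<in> M" for x b
      unfolding c_def using that bdd Lin by (intro cSup_upper) auto
    have cU: "c \<le> p (x + y) - b" if "(x,b) \<in> M" for x b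
      unfolding c_def using Lne that Uin LU by (intro cSup_least) auto
    define M' where "M' = {(x + t *\<^sub>R y, b + t * c) | x b t. (x,b) \<in> M}"
    have M'in: "(x + t *\<^sub>R y, b + t * c) \<in> M'" if "(x,b) \<in> M" for x b t
      unfolding M'_def using that by blast
    have M'A: "M' \<in> A"
      unfolding A_def hbA_def
    proof (intro CollectI conjI ballI allI impI)
      show "(0,0) \<in> M'" using M'in[OF M0, of 0] by simp
    next
      fix z1 z2 assume "z1 \<in> M'" "z2 \<in> M'"
      then obtain x1 b1 t1 x2 b2 t2 where h: "(x1,b1) \<in> M" "(x2,b2) \<in> M"
        "z1 = (x1 + t1 *\<^sub>R y, b1 + t1 * c)" "z2 = (x2 + t2 *\<^sub>R y, b2 + t2 * c)"
        unfolding M'_def by blast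
      have "(x1 + x2, b1 + b2) \<in> M" using Madd[OF h(1,2)] by simp
      moreover have "z1 + z2 = ((x1 + x2) + (t1 + t2) *\<^sub>R y, (b1 + b2) + (t1 + t2) * c)"
        using h by (simp add: algebra_simps)
      ultimately show "z1 + z2 \<in> M'" using M'in by simp
    next
      fix s z assume "z \<in> M'"
      then obtain x b t where h: "(x,b) \<in> M" "z = (x + t *\<^sub>R y, b + t * c)"
        unfolding M'_def by blast
      have "(s *\<^sub>R x, s * b) \<in> M" using Msc[OF h(1), of s] by simp
      moreover have "s *\<^sub>R z = (s *\<^sub>R x + (s * t) *\<^sub>R y, s * b + (s * t) * c)"
        using h by (simp add: algebra_simps)
      ultimately show "s *\<^sub>R z \<in> M'" using M'in by simp
    next
      show "G0 \<subseteq> M'"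
      proof
        fix z assume "z \<in> G0"
        then have "z \<in> M" using G0M by blast
        then show "z \<in> M'" using M'in[of "fst z" "snd z" 0] by simp
      qed
    next
      fix b' assume "(0,b') \<in> M'"
      then obtain x b t where h: "(x,b) \<in> M" "0 = x + t *\<^sub>R y" "b' = b + t * c"
        unfolding M'_def by blast
      show "b' = 0"
      proof (cases "t = 0")
        case True then show ?thesis using h Mfun by auto
      next
        case False
        have "((-1/t) *\<^sub>R x, (-1/t) * b) \<in> M" using Msc[OF h(1), of "-1/t"] by simp
        moreover have "(-1/t) *\<^sub>R x = y"
        proof -
          have "x = - (t *\<^sub>R y)" using h(2) by (simp add: eq_neg_iff_add_eq_0)
          then show ?thesis using False by simp
        qed
        ultimately show ?thesis using ny by auto
      qed
    next
      fix z b' assume "(z,b') \<in> M'"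
      then obtain x b t where h: "(x,b) \<in> M" "z = x + t *\<^sub>R y" "b' = b + t * c"
        unfolding M'_def by blast
      show "b' \<le> p z"
      proof (cases t "0::real" rule: linorder_cases)
        case equal then show ?thesis using h Mdom by auto
      next
        case greater
        have "((1/t) *\<^sub>R x, (1/t) * b) \<in> M" using Msc[OF h(1), of "1/t"] by simp
        from cU[OF this] have c1: "c \<le> p ((1/t) *\<^sub>R x + y) - (1/t) * b" .
        have "t * c \<le> t * (p ((1/t) *\<^sub>R x + y) - (1/t) * b)"
          using mult_left_mono[OF c1, of t] greater by simp
        also have "\<dots> = t * p ((1/t) *\<^sub>R x + y) - b"
          using greater by (simp add: right_diff_distrib)
        finally have c2: "t * c \<le> t * p ((1/t) *\<^sub>R x + y) - b" .
        have c3: "t * p ((1/t) *\<^sub>R x + y) = p (t *\<^sub>R ((1/t) *\<^sub>R x + y))"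
          using hom[of t "(1/t) *\<^sub>R x + y"] greater by simp
        have c4: "t *\<^sub>R ((1/t) *\<^sub>R x + y) = z" using greater h(2) by (simp add: scaleR_add_right)
        show ?thesis using c2 c3 c4 h(3) by simp
      next
        case less
        define s where "s = - t"
        have s: "s > 0" using less s_def by simp
        have "((1/s) *\<^sub>R x, (1/s) * b) \<in> M" using Msc[OF h(1), of "1/s"] by simp
        from cL[OF this] have c1: "(1/s) * b - p ((1/s) *\<^sub>R x - y) \<le> c" .
        have "s * ((1/s) * b - p ((1/s) *\<^sub>R x - y)) \<le> s * c"
          using mult_left_mono[OF c1, of s] s by simp
        moreover have "s * ((1/s) * b - p ((1/s) *\<^sub>R x - y)) = b - s * p ((1/s) *\<^sub>R x - y)"
          using s by (simp add: right_diff_distrib)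
        ultimately have c2: "b - s * p ((1/s) *\<^sub>R x - y) \<le> s * c" by simp
        have c3: "s * p ((1/s) *\<^sub>R x - y) = p (s *\<^sub>R ((1/s) *\<^sub>R x - y))"
          using hom[of s "(1/s) *\<^sub>R x - y"] s by simp
        have c4: "s *\<^sub>R ((1/s) *\<^sub>R x - y) = z" using s h(2) by (simp add: scaleR_diff_right s_def)
        show ?thesis using c2 c3 c4 h(3) s_def by simp
      qed
    qed
    have "M \<subseteq> M'"
    proof
      fix z assume "z \<in> M"
      then show "z \<in> M'" using M'in[of "fst z" "snd z" 0] by simp
    qed
    with maxM[OF M'A] have "M' = M" by simp
    moreover have "(y, c) \<in> M'" using M'in[OF M0, of 1] by simp
    ultimately show False using ny by auto
  qed
  define g where "g x = (THE b. (x,b) \<in> M)" for x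
  have gM: "(x, g x) \<in> M" for x
  proof -
    obtain b where b: "(x,b) \<in> M" using total[of x] by blast
    have "(THE b. (x,b) \<in> M) = b" by (rule the_equality) (use b Mfun2 in blast)+
    then show ?thesis using b unfolding g_def by simp
  qed
  have geq: "g x = b" if "(x,b) \<in> M" for x b using Mfun2[OF gM that] .
  have "linear g"
  proof (rule linearI)
    fix x y show "g (x + y) = g x + g y"
      using Madd[OF gM[of x] gM[of y]] geq by simp
  next
    fix c x show "g (c *\<^sub>R x) = c *\<^sub>R g x"
      using Msc[OF gM[of x], of c] geq by simp
  qed
  moreover have "g v = a"
  proof -
    have "(v,a) \<in> G0" unfolding G0_def by (rule range_eqI[of _ _ 1]) simp
    then show ?thesis using G0M geq by blast
  qed
  moreover have "g x \<le> p x" for x using Mdom[OF gM] .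
  ultimately show ?thesis by blast
qed

lemma lin_dom_bounded:
  fixes g :: "'a::real_normed_vector \<Rightarrow> real"
  assumes g: "linear g" and K: "\<And>x. g x \<le> K * norm x"
  shows "bounded_linear g"
proof (rule bounded_linear_intro[where K=K])
  fix x y show "g (x + y) = g x + g y" using linear_add[OF g] .
next
  fix r x show "g (r *\<^sub>R x) = r *\<^sub>R g x" using linear_scale[OF g] .
next
  fix x
  have "- g x = g (- x)" using linear_neg[OF g] by simp
  also have "\<dots> \<le> K * norm x" using K[of "-x"] by simp
  finally show "norm (g x) \<le> norm x * K" using K[of x] by (simp add: abs_le_iff mult.commute)
qed

lemma norming_functional:
  fixes d :: "'a::real_normed_vector"
  shows "\<exists>f::'a \<Rightarrow>\<^sub>L real. norm f \<le> 1 \<and> blinfun_apply f d = norm d"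
proof (cases "d = 0")
  case True then show ?thesis by (intro exI[of _ 0]) simp
next
  case False
  have "\<exists>g. linear g \<and> g d = norm d \<and> (\<forall>x. g x \<le> norm x)"
  proof (rule hb_ext)
    fix x y :: 'a show "norm (x + y) \<le> norm x + norm y" by (rule norm_triangle_ineq)
  next
    fix c :: real and x :: 'a assume "c \<ge> 0" then show "norm (c *\<^sub>R x) = c * norm x" by simp
  next
    show "d \<noteq> 0" by fact
  next
    fix t :: real show "t * norm d \<le> norm (t *\<^sub>R d)"
      by (simp add: mult_right_mono)
  qed
  then obtain g where g: "linear g" "g d = norm d" "\<And>x. g x \<le> norm x" by blast
  have bl: "bounded_linear g" using lin_dom_bounded[OF g(1), of 1] g(3) by simp
  show ?thesis
  proof (intro exI conjI)
    show "norm (Blinfun g) \<le> 1"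
    proof (rule norm_blinfun_bound)
      fix x
      have "- g x = g (- x)" using linear_neg[OF g(1)] by simp
      also have "\<dots> \<le> norm x" using g(3)[of "-x"] by simp
      finally show "norm (blinfun_apply (Blinfun g) x) \<le> 1 * norm x"
        using g(3)[of x] by (simp add: bounded_linear_Blinfun_apply[OF bl] abs_le_iff)
    qed simp
    show "blinfun_apply (Blinfun g) d = norm d" using g(2) by (simp add: bounded_linear_Blinfun_apply[OF bl])
  qed
qed

lemma infdist_sub:
  fixes S :: "'a::real_normed_vector set"
  assumes S: "subspace S"
  shows "infdist (x + y) S \<le> infdist x S + infdist y S"
proof -
  have ne: "S \<noteq> {}" using subspace_0[OF S] by blast
  have 1: "infdist (x + y) S - dist y s2 \<le> infdist x S" if s2: "s2 \<in> S" for s2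
  proof -
    have "infdist (x + y) S - dist y s2 \<le> dist x s1" if s1: "s1 \<in> S" for s1
    proof -
      have "infdist (x + y) S \<le> dist (x + y) (s1 + s2)"
        using subspace_add[OF S s1 s2] by (rule infdist_le)
      also have "\<dots> \<le> dist x s1 + dist y s2" by (rule dist_triangle_add)
      finally show ?thesis by simp
    qed
    then show ?thesis unfolding infdist_notempty[OF ne] by (intro cINF_greatest[OF ne]) auto
  qed
  have "infdist (x + y) S - infdist x S \<le> dist y s2" if "s2 \<in> S" for s2
    using 1[OF that] by simp
  then have "infdist (x + y) S - infdist x S \<le> infdist y S"
    unfolding infdist_notempty[OF ne] by (intro cINF_greatest[OF ne]) (auto simp: infdist_notempty[OF ne])
  then show ?thesis by simp
qed

lemma infdist_scale_le:
  fixes S :: "'a::real_normed_vector set"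
  assumes S: "subspace S" and c: "c > 0"
  shows "infdist (c *\<^sub>R x) S \<le> c * infdist x S"
proof -
  have ne: "S \<noteq> {}" using subspace_0[OF S] by blast
  have "infdist (c *\<^sub>R x) S / c \<le> dist x s" if s: "s \<in> S" for s
  proof -
    have "infdist (c *\<^sub>R x) S \<le> dist (c *\<^sub>R x) (c *\<^sub>R s)"
      using subspace_scale[OF S s] by (rule infdist_le)
    also have "\<dots> = c * dist x s"
      using c by (simp add: dist_norm scaleR_diff_right[symmetric])
    finally show ?thesis using c by (simp add: divide_le_eq mult.commute)
  qed
  then have "infdist (c *\<^sub>R x) S / c \<le> infdist x S"
    unfolding infdist_notempty[OF ne] by (intro cINF_greatest[OF ne]) (auto simp: infdist_notempty[OF ne])
  then show ?thesis using c by (simp add: divide_le_eq mult.commute)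
qed

lemma infdist_scale:
  fixes S :: "'a::real_normed_vector set"
  assumes S: "subspace S" and c: "c \<ge> 0"
  shows "infdist (c *\<^sub>R x) S = c * infdist x S"
proof (cases "c = 0")
  case True then show ?thesis using subspace_0[OF S] by simp
next
  case False
  then have c: "c > 0" using c by simp
  have "infdist x S = infdist ((1/c) *\<^sub>R (c *\<^sub>R x)) S" using c by simp
  also have "\<dots> \<le> (1/c) * infdist (c *\<^sub>R x) S" using c by (intro infdist_scale_le[OF S]) auto
  finally have "c * infdist x S \<le> infdist (c *\<^sub>R x) S" using c by (simp add: field_simps)
  with infdist_scale_le[OF S c, of x] show ?thesis by simp
qed

lemma dual_dense:
  fixes dk :: "nat \<Rightarrow> 'w::banach" and fs :: "nat \<Rightarrow> 'w \<Rightarrow>\<^sub>L real"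
  assumes refl: "reflexive_space TYPE('w)"
    and dense: "closure (range dk) = UNIV"
    and fs: "\<And>k. norm (fs k) \<le> 1" "\<And>k. blinfun_apply (fs k) (dk k) = norm (dk k)"
  shows "g \<in> closure (span (range fs))"
proof (rule ccontr)
  define S where "S = span (range fs)"
  assume ng: "g \<notin> closure (span (range fs))"
  then have ng': "g \<notin> closure S" unfolding S_def .
  have Ssub: "subspace S" unfolding S_def by (rule subspace_span)
  have ne: "S \<noteq> {}" using subspace_0[OF Ssub] by blast
  define \<delta> where "\<delta> = infdist g S"
  have dpos: "\<delta> > 0" using ng' in_closure_iff_infdist_zero[OF ne, of g] infdist_nonneg[of g S]
    unfolding \<delta>_def by simp
  have g0: "g \<noteq> 0" using ng' subspace_0[OF Ssub] closure_subset by blast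
  have "\<exists>\<Phi>. linear \<Phi> \<and> \<Phi> g = \<delta> \<and> (\<forall>h. \<Phi> h \<le> infdist h S)"
  proof (rule hb_ext)
    fix x y show "infdist (x + y) S \<le> infdist x S + infdist y S" by (rule infdist_sub[OF Ssub])
  next
    fix c :: real and x assume "c \<ge> 0" then show "infdist (c *\<^sub>R x) S = c * infdist x S"
      by (rule infdist_scale[OF Ssub])
  next
    show "g \<noteq> 0" by fact
  next
    fix t :: real show "t * \<delta> \<le> infdist (t *\<^sub>R g) S"
    proof (cases "t \<ge> 0")
      case True then show ?thesis using infdist_scale[OF Ssub True, of g] unfolding \<delta>_def by simp
    next
      case False then have "t * \<delta> \<le> 0" using dpos by (simp add: mult_nonpos_nonneg)
      then show ?thesis using infdist_nonneg order_trans by blast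
    qed
  qed
  then obtain \<Phi> where \<Phi>: "linear \<Phi>" "\<Phi> g = \<delta>" "\<And>h. \<Phi> h \<le> infdist h S" by blast
  have \<Phi>n: "\<Phi> h \<le> 1 * norm h" for h
  proof -
    have "infdist h S \<le> dist h 0" using subspace_0[OF Ssub] by (rule infdist_le)
    then show ?thesis using \<Phi>(3)[of h] by simp
  qed
  have blP: "bounded_linear \<Phi>" by (rule lin_dom_bounded[OF \<Phi>(1) \<Phi>n])
  have \<Phi>S: "\<Phi> s = 0" if "s \<in> S" for s
  proof -
    have "\<Phi> s \<le> 0" using \<Phi>(3)[of s] infdist_zero[OF that] by simp
    moreover have "- s \<in> S" using subspace_neg[OF Ssub that] .
    then have "\<Phi> (- s) \<le> 0" using \<Phi>(3)[of "-s"] infdist_zero by simp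
    then have "- \<Phi> s \<le> 0" using linear_neg[OF \<Phi>(1)] by simp
    ultimately show ?thesis by simp
  qed
  obtain x where x: "\<And>f. blinfun_apply (Blinfun \<Phi>) f = blinfun_apply f x"
    using refl unfolding reflexive_space_def by blast
  have xf: "\<Phi> f = blinfun_apply f x" for f using x[of f] by (simp add: bounded_linear_Blinfun_apply[OF blP])
  have fsx: "blinfun_apply (fs k) x = 0" for k
    using \<Phi>S[of "fs k"] xf[of "fs k"] span_superset[of "range fs"] unfolding S_def by auto
  have "norm x < 2 * e" if e: "e > 0" for e
  proof -
    have "x \<in> closure (range dk)" using dense by simp
    then obtain y where y: "y \<in> range dk" "dist y x < e" using e unfolding closure_approachable by blast
    then obtain k where k: "y = dk k" by blast
    have "norm (dk k) = blinfun_apply (fs k) (dk k) - blinfun_apply (fs k) x" using fs(2)[of k] fsx[of k] by simp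
    also have "\<dots> = blinfun_apply (fs k) (dk k - x)" by (simp add: blinfun.diff_right)
    also have "\<dots> \<le> norm (fs k) * norm (dk k - x)" using norm_blinfun[of "fs k" "dk k - x"] by simp
    also have "\<dots> \<le> 1 * norm (dk k - x)" using fs(1)[of k] by (intro mult_right_mono) auto
    finally have "norm (dk k) < e" using y k by (simp add: dist_norm)
    moreover have "norm x \<le> norm (dk k) + norm (dk k - x)" using norm_triangle_sub[of x "dk k"]
      by (simp add: norm_minus_commute)
    ultimately show ?thesis using y k by (simp add: dist_norm)
  qed
  then have "norm x \<le> 0"
    by (metis field_sum_of_halves linorder_not_le mult_2 order_less_irrefl zero_less_norm_iff norm_zero
          half_gt_zero dual_order.strict_trans1 less_eq_real_def)
  then have "x = 0" by simp
  then have "\<Phi> g = 0" using xf[of g] by simp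
  then show False using \<Phi>(2) dpos by simp
qed

lemma weak_compact:
  fixes xs :: "nat \<Rightarrow> 'w::banach"
  assumes refl: "reflexive_space TYPE('w)" and sep: "separable_space TYPE('w)"
    and bnd: "\<And>n. norm (xs n) \<le> C"
  shows "\<exists>r u. strict_mono r \<and> weak_conv (xs \<circ> r) u"
proof -
  obtain D :: "'w set" where D: "countable D" "closure D = UNIV"
    using sep unfolding separable_space_def by blast
  have Dne: "D \<noteq> {}" using D(2) by auto
  define dk where "dk = from_nat_into D"
  have dkD: "range dk = D" unfolding dk_def by (rule range_from_nat_into[OF Dne D(1)])
  have "\<forall>k. \<exists>f::'w \<Rightarrow>\<^sub>L real. norm f \<le> 1 \<and> blinfun_apply f (dk k) = norm (dk k)"
    using norming_functional by blast
  then obtain fs where fs: "\<And>k. norm (fs k) \<le> 1" "\<And>k. blinfun_apply (fs k) (dk k) = norm (dk k)"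
    by metis
  have C0: "0 \<le> C" using bnd[of 0] norm_ge_zero order_trans by blast
  have fb: "\<bar>blinfun_apply f (xs n)\<bar> \<le> norm f * C" for f n
  proof -
    have "\<bar>blinfun_apply f (xs n)\<bar> \<le> norm f * norm (xs n)" using norm_blinfun[of f "xs n"] by simp
    also have "\<dots> \<le> norm f * C" using bnd[of n] by (intro mult_left_mono) auto
    finally show ?thesis .
  qed
  define P where "P = (\<lambda>k (s::nat \<Rightarrow> nat). convergent (\<lambda>n. blinfun_apply (fs k) (xs (s n))))"
  interpret subseqs P
  proof
    fix k and s :: "nat \<Rightarrow> nat" assume "strict_mono s"
    obtain f where f: "strict_mono f" "monoseq (\<lambda>n. blinfun_apply (fs k) (xs (s (f n))))"
      using seq_monosub[of "\<lambda>n. blinfun_apply (fs k) (xs (s n))"] by blast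
    have "Bseq (\<lambda>n. blinfun_apply (fs k) (xs (s (f n))))"
      by (rule BseqI'[of _ "norm (fs k) * C"]) (simp add: fb)
    then have "convergent (\<lambda>n. blinfun_apply (fs k) (xs (s (f n))))"
      using f(2) by (rule Bseq_monoseq_convergent)
    then show "\<exists>r'. strict_mono r' \<and> P k (s \<circ> r')" using f(1) unfolding P_def by (auto simp: o_def)
  qed
  define r where "r = diagseq"
  have r: "strict_mono r" unfolding r_def by (rule subseq_diagseq)
  have convk: "convergent (\<lambda>n. blinfun_apply (fs k) (xs (r n)))" for k
  proof -
    have "P k (diagseq \<circ> (+) (Suc k))"
    proof (rule diagseq_holds)
      fix r' s :: "nat \<Rightarrow> nat" and n assume "strict_mono r'" "P n s"
      then show "P n (s \<circ> r')" unfolding P_def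
        using convergent_subseq_convergent[of "\<lambda>m. blinfun_apply (fs n) (xs (s m))" r']
        by (simp add: o_def)
    qed
    then have "convergent (\<lambda>n. blinfun_apply (fs k) (xs (r (n + Suc k))))"
      unfolding P_def r_def by (simp add: o_def add.commute)
    then show ?thesis by (rule iffD1[OF convergent_ignore_initial_segment])
  qed
  define Q where "Q = {h :: 'w \<Rightarrow>\<^sub>L real. convergent (\<lambda>n. blinfun_apply h (xs (r n)))}"
  have spanQ: "h \<in> Q" if "h \<in> span (range fs)" for h
  proof -
    have "subspace Q" unfolding subspace_def Q_def
    proof (intro conjI ballI allI CollectI)
      show "convergent (\<lambda>n. blinfun_apply 0 (xs (r n)))" by (simp add: convergent_const)
    next
      fix x y :: "'w \<Rightarrow>\<^sub>L real" assume "x \<in> {h. convergent (\<lambda>n. blinfun_apply h (xs (r n)))}"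
        "y \<in> {h. convergent (\<lambda>n. blinfun_apply h (xs (r n)))}"
      then show "convergent (\<lambda>n. blinfun_apply (x + y) (xs (r n)))"
        by (simp add: plus_blinfun.rep_eq convergent_add)
    next
      fix c and x :: "'w \<Rightarrow>\<^sub>L real" assume "x \<in> {h. convergent (\<lambda>n. blinfun_apply h (xs (r n)))}"
      then show "convergent (\<lambda>n. blinfun_apply (c *\<^sub>R x) (xs (r n)))"
        by (cases "c = 0") (simp_all add: scaleR_blinfun.rep_eq convergent_const convergent_mult_const_iff)
    qed
    then have sQ: "subspace {h :: 'w \<Rightarrow>\<^sub>L real. convergent (\<lambda>n. blinfun_apply h (xs (r n)))}" unfolding Q_def .
    have "convergent (\<lambda>n. blinfun_apply h (xs (r n)))"
      using that sQ by (rule span_induct) (use convk in auto)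
    then show ?thesis unfolding Q_def by simp
  qed
  have convg: "convergent (\<lambda>n. blinfun_apply g (xs (r n)))" for g :: "'w \<Rightarrow>\<^sub>L real"
  proof -
    have "Cauchy (\<lambda>n. blinfun_apply g (xs (r n)))"
      unfolding Cauchy_def
    proof (intro allI impI)
      fix e :: real assume e: "e > 0"
      have "g \<in> closure (span (range fs))" using dual_dense[OF refl _ fs] D(2) dkD by simp
      then obtain h where h: "h \<in> span (range fs)" "dist h g < e / (3 * (C + 1))"
        using e C0 unfolding closure_approachable by (metis divide_pos_pos mult_pos_pos zero_less_numeral add_nonneg_pos zero_less_one)
      have "Cauchy (\<lambda>n. blinfun_apply h (xs (r n)))"
        using spanQ[OF h(1)] unfolding Q_def by (simp add: convergent_Cauchy)
      then obtain N where N: "\<And>m n. m \<ge> N \<Longrightarrow> n \<ge> N \<Longrightarrow>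
          dist (blinfun_apply h (xs (r m))) (blinfun_apply h (xs (r n))) < e / 3"
        using e unfolding Cauchy_def by (meson divide_pos_pos zero_less_numeral)
      have gh: "\<bar>blinfun_apply g y - blinfun_apply h y\<bar> \<le> e / 3" if "y \<in> range xs" for y
      proof -
        obtain n where y: "y = xs n" using \<open>y \<in> range xs\<close> by blast
        have "\<bar>blinfun_apply g y - blinfun_apply h y\<bar> = \<bar>blinfun_apply (g - h) y\<bar>"
          by (simp add: minus_blinfun.rep_eq)
        also have "\<dots> \<le> norm (g - h) * C" using fb[of "g - h" n] y by simp
        also have "\<dots> \<le> (e / (3 * (C + 1))) * C"
          using h(2) C0 by (intro mult_right_mono) (auto simp: dist_norm norm_minus_commute)
        also have "\<dots> \<le> e / 3"
        proof -
          have "(e / (3 * (C + 1))) * C = (e / 3) * (C / (C + 1))" by (simp add: field_simps)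
          also have "\<dots> \<le> (e / 3) * 1" using C0 e by (intro mult_left_mono) auto
          finally show ?thesis by simp
        qed
        finally show ?thesis .
      qed
      show "\<exists>M. \<forall>m\<ge>M. \<forall>n\<ge>M. dist (blinfun_apply g (xs (r m))) (blinfun_apply g (xs (r n))) < e"
      proof (intro exI allI impI)
        fix m n assume mn: "m \<ge> N" "n \<ge> N"
        have a: "\<bar>blinfun_apply g (xs (r m)) - blinfun_apply h (xs (r m))\<bar> \<le> e / 3" by (rule gh) simp
        have b: "\<bar>blinfun_apply g (xs (r n)) - blinfun_apply h (xs (r n))\<bar> \<le> e / 3" by (rule gh) simp
        have c: "\<bar>blinfun_apply h (xs (r m)) - blinfun_apply h (xs (r n))\<bar> < e / 3"
          using N[OF mn] by (simp add: dist_real_def)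
        show "dist (blinfun_apply g (xs (r m))) (blinfun_apply g (xs (r n))) < e"
          using a b c unfolding dist_real_def by linarith
      qed
    qed
    then show ?thesis by (simp add: Cauchy_convergent_iff)
  qed
  define L where "L g = lim (\<lambda>n. blinfun_apply g (xs (r n)))" for g :: "'w \<Rightarrow>\<^sub>L real"
  have Llim: "(\<lambda>n. blinfun_apply g (xs (r n))) \<longlonglongrightarrow> L g" for g
    using convg[of g] unfolding L_def by (simp add: convergent_LIMSEQ_iff)
  have blL: "bounded_linear L"
  proof (rule bounded_linear_intro[where K=C])
    fix x y show "L (x + y) = L x + L y"
      using Llim[of "x + y"] tendsto_add[OF Llim[of x] Llim[of y]]
      by (simp add: plus_blinfun.rep_eq LIMSEQ_unique)
  next
    fix c x show "L (c *\<^sub>R x) = c *\<^sub>R L x"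
      using Llim[of "c *\<^sub>R x"] tendsto_mult[OF tendsto_const[of c] Llim[of x]]
      by (simp add: scaleR_blinfun.rep_eq LIMSEQ_unique)
  next
    fix x
    have "(\<lambda>n. norm (blinfun_apply x (xs (r n)))) \<longlonglongrightarrow> norm (L x)" by (rule tendsto_norm[OF Llim])
    then show "norm (L x) \<le> norm x * C"
      by (rule LIMSEQ_le_const2) (use fb in auto)
  qed
  obtain u where u: "\<And>f. blinfun_apply (Blinfun L) f = blinfun_apply f u"
    using refl unfolding reflexive_space_def by blast
  have Lu: "L f = blinfun_apply f u" for f using u[of f] by (simp add: bounded_linear_Blinfun_apply[OF blL])
  have "weak_conv (xs \<circ> r) u"
    unfolding weak_conv_def
  proof (intro allI impI)
    fix f :: "'w \<Rightarrow> real" assume f: "bounded_linear f"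
    show "(\<lambda>n. f ((xs \<circ> r) n)) \<longlonglongrightarrow> f u"
      using Llim[of "Blinfun f"] Lu[of "Blinfun f"] by (simp add: bounded_linear_Blinfun_apply[OF f])
  qed
  then show ?thesis using r by blast
qed

theorem mainTheorem4:
  fixes A :: "'w::banach \<Rightarrow> 'v::banach \<Rightarrow> real"
    and F :: "'v \<Rightarrow> real"
    and u :: 'w and M :: real
    and W\<theta> :: "'w set" and V\<eta> :: "'v set"
    and ws :: "nat \<Rightarrow> 'w"
  assumes reflW: "reflexive_space TYPE('w)" and sepW: "separable_space TYPE('w)"
    and reflV: "reflexive_space TYPE('v)" and sepV: "separable_space TYPE('v)"
    and linA1: "\<And>v. linear (\<lambda>w. A w v)"
    and linA2: "\<And>w. linear (A w)"
    and bndA: "\<And>w v. A w v \<le> M * norm w * norm v"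
    and F: "bounded_linear F"
    and sol: "\<And>v. A u v = F v"
    and uniq: "\<And>w. (\<forall>v. A w v = F v) \<Longrightarrow> w = u"
    and V\<eta>_ne: "\<exists>v\<in>V\<eta>. norm v \<noteq> 0"
    and infsup: "\<exists>\<kappa>>0. \<forall>w \<in> W\<theta> \<union> diff_set W\<theta>. \<kappa> * norm w \<le> op_norm A V\<eta> w"
    and ws_in: "\<And>n. ws n \<in> W\<theta>"
    and minimizing: "(\<lambda>n. ereal (op_norm A V\<eta> (u - ws n)))
                       \<longlonglongrightarrow> (INF w\<in>W\<theta>. ereal (op_norm A V\<eta> (u - w)))"
  shows "(\<exists>r u\<^sub>s. strict_mono r \<and> weak_conv (ws \<circ> r) u\<^sub>s \<and> u\<^sub>s \<in> seq_weak_closure W\<theta>)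
       \<and> (\<forall>r u\<^sub>s. strict_mono r \<and> weak_conv (ws \<circ> r) u\<^sub>s \<longrightarrow>
              (\<forall>w\<in>W\<theta>. op_norm A V\<eta> (u - u\<^sub>s) \<le> op_norm A V\<eta> (u - w)))"
proof -
  define Vs where "Vs = {v \<in> V\<eta>. norm v \<noteq> 0}"
  define B where "B w = op_norm A V\<eta> w" for w
  define Linf where "Linf = (INF w\<in>W\<theta>. ereal (op_norm A V\<eta> (u - w)))"
  have Vsne: "Vs \<noteq> {}" using V\<eta>_ne unfolding Vs_def by blast
  have Bdef: "B w = (SUP v\<in>Vs. A w v / norm v)" for w unfolding B_def op_norm_def Vs_def ..
  have absA: "\<bar>A w v\<bar> \<le> M * norm w * norm v" for w v
  proof -
    have "- A w v = A w (- v)" using linear_neg[OF linA2[of w]] by simp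
    also have "\<dots> \<le> M * norm w * norm v" using bndA[of w "-v"] by simp
    finally show ?thesis using bndA[of w v] by (simp add: abs_le_iff)
  qed
  have absQ: "\<bar>A w v / norm v\<bar> \<le> M * norm w" if "v \<in> Vs" for w v
  proof -
    have nv: "norm v > 0" using that unfolding Vs_def by simp
    have "\<bar>A w v / norm v\<bar> = \<bar>A w v\<bar> / norm v" by simp
    also have "\<dots> \<le> M * norm w * norm v / norm v" using absA[of w v] nv by (intro divide_right_mono) auto
    also have "\<dots> = M * norm w" using nv by simp
    finally show ?thesis .
  qed
  have bdd: "bdd_above ((\<lambda>v. A w v / norm v) ` Vs)" for w
  proof (rule bdd_aboveI2[of _ _ "M * norm w"])
    fix v assume "v \<in> Vs"
    then show "A w v / norm v \<le> M * norm w" using absQ[of v w] by linarith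
  qed
  have Bup: "A w v / norm v \<le> B w" if "v \<in> Vs" for w v
    unfolding Bdef using bdd that by (rule cSUP_upper2) simp
  have Bleast: "B w \<le> c" if "\<And>v. v \<in> Vs \<Longrightarrow> A w v / norm v \<le> c" for w c
    unfolding Bdef using Vsne that by (rule cSUP_least)
  have Adiff: "A (x - y) v = A x v - A y v" for x y v using linear_diff[OF linA1[of v]] by simp
  have part2: "B (u - us) \<le> B (u - w)" if r: "strict_mono r" and wc: "weak_conv (ws \<circ> r) us"
    and w: "w \<in> W\<theta>" for r us w
  proof (rule Bleast)
    fix v assume v: "v \<in> Vs"
    have nv: "norm v > 0" using v unfolding Vs_def by simp
    define f where "f z = A z v / norm v" for z
    have blf: "bounded_linear f"
    proof (rule bounded_linear_intro[where K=M])
      fix x y show "f (x + y) = f x + f y"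
        unfolding f_def using linear_add[OF linA1[of v], of x y] by (simp add: add_divide_distrib)
    next
      fix c x show "f (c *\<^sub>R x) = c *\<^sub>R f x"
        unfolding f_def using linear_scale[OF linA1[of v], of c x] by simp
    next
      fix x show "norm (f x) \<le> norm x * M" unfolding f_def using absQ[OF v, of x] by (simp add: mult.commute)
    qed
    have fl: "(\<lambda>n. f (ws (r n))) \<longlonglongrightarrow> f us" using wc blf unfolding weak_conv_def by (simp add: o_def)
    have eq: "A (u - z) v / norm v = A u v / norm v - f z" for z
      unfolding f_def Adiff by (simp add: diff_divide_distrib)
    have al: "(\<lambda>n. A (u - ws (r n)) v / norm v) \<longlonglongrightarrow> A (u - us) v / norm v"
      unfolding eq by (intro tendsto_diff tendsto_const fl)
    have el: "(\<lambda>n. ereal (A (u - ws (r n)) v / norm v)) \<longlonglongrightarrow> ereal (A (u - us) v / norm v)"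
      using al by (rule tendsto_ereal)
    have bl: "(\<lambda>n. ereal (B (u - ws (r n)))) \<longlonglongrightarrow> Linf"
      using LIMSEQ_subseq_LIMSEQ[OF minimizing r] unfolding B_def Linf_def by (simp add: o_def)
    have "ereal (A (u - us) v / norm v) \<le> Linf"
      by (rule LIMSEQ_le[OF el bl]) (auto intro: Bup[OF v])
    also have "Linf \<le> ereal (B (u - w))" unfolding Linf_def B_def using w by (rule INF_lower)
    finally show "A (u - us) v / norm v \<le> B (u - w)" by simp
  qed
  obtain \<kappa> where \<kappa>: "\<kappa> > 0" "\<And>w. w \<in> W\<theta> \<union> diff_set W\<theta> \<Longrightarrow> \<kappa> * norm w \<le> B w"
    using infsup unfolding B_def by blast
  have Bdn: "B (ws 0 - ws n) \<le> B (u - ws n) + M * norm (u - ws 0)" for n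
  proof (rule Bleast)
    fix v assume v: "v \<in> Vs"
    have "ws 0 - ws n = (u - ws n) - (u - ws 0)" by simp
    then have "A (ws 0 - ws n) v / norm v = A (u - ws n) v / norm v - A (u - ws 0) v / norm v"
      by (simp add: Adiff diff_divide_distrib)
    moreover have "A (u - ws n) v / norm v \<le> B (u - ws n)" by (rule Bup[OF v])
    moreover have "- (A (u - ws 0) v / norm v) \<le> M * norm (u - ws 0)" using absQ[OF v, of "u - ws 0"] abs_ge_minus_self[of "A (u - ws 0) v / norm v"] by linarith
    ultimately show "A (ws 0 - ws n) v / norm v \<le> B (u - ws n) + M * norm (u - ws 0)" by simp
  qed
  have "Linf < ereal (B (u - ws 0) + 1)"
  proof -
    have "Linf \<le> ereal (B (u - ws 0))" unfolding Linf_def B_def using ws_in[of 0] by (rule INF_lower)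
    also have "\<dots> < ereal (B (u - ws 0) + 1)" by simp
    finally show ?thesis .
  qed
  from order_tendstoD(2)[OF minimizing[folded Linf_def] this]
  obtain N where N: "\<And>n. n \<ge> N \<Longrightarrow> B (u - ws n) < B (u - ws 0) + 1"
    unfolding eventually_sequentially B_def by auto
  define K where "K = norm (ws 0) + (B (u - ws 0) + 1 + M * norm (u - ws 0)) / \<kappa>"
  define xs where "xs n = ws (n + N)" for n
  have xsb: "norm (xs n) \<le> K" for n
  proof -
    have dm: "ws 0 - ws (n + N) \<in> W\<theta> \<union> diff_set W\<theta>"
      unfolding diff_set_def using ws_in by blast
    have "\<kappa> * norm (ws 0 - ws (n + N)) \<le> B (u - ws 0) + 1 + M * norm (u - ws 0)"
      using \<kappa>(2)[OF dm] Bdn[of "n + N"] N[of "n + N"] by simp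
    then have "norm (ws 0 - ws (n + N)) \<le> (B (u - ws 0) + 1 + M * norm (u - ws 0)) / \<kappa>"
      using \<kappa>(1) by (simp add: le_divide_eq mult.commute)
    moreover have "norm (ws (n + N)) \<le> norm (ws 0) + norm (ws 0 - ws (n + N))"
      using norm_triangle_sub[of "ws (n + N)" "ws 0"] by (simp add: norm_minus_commute)
    ultimately show ?thesis unfolding xs_def K_def by simp
  qed
  obtain r' us where r': "strict_mono r'" "weak_conv (xs \<circ> r') us"
    using weak_compact[OF reflW sepW, of xs K] xsb by blast
  define r where "r n = r' n + N" for n
  have r: "strict_mono r" using r'(1) unfolding r_def strict_mono_def by simp
  have eqs: "ws \<circ> r = xs \<circ> r'" unfolding r_def xs_def by (simp add: o_def)
  have "us \<in> seq_weak_closure W\<theta>"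
    unfolding seq_weak_closure_def using ws_in r'(2) eqs[symmetric]
    by (intro CollectI exI[of _ "ws \<circ> r"]) simp
  then have p1: "\<exists>r u\<^sub>s. strict_mono r \<and> weak_conv (ws \<circ> r) u\<^sub>s \<and> u\<^sub>s \<in> seq_weak_closure W\<theta>"
    using r r'(2) eqs by metis
  show ?thesis using p1 part2 unfolding B_def by blast
qed

end
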